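(* Let $\mathcal{C}$ be a category and $A$ an object of $\mathcal{C}$ satisfying the axioms RC0, RC1, RC2 below. Then every arrow $x\colon A\to X$ in $\mathcal{C}$ is a quotient of $A$ by the subgroup $H=\mathrm{Fix}(x)=\{h\in \mathrm{Aut}(A): x\circ h=x\}$; that is, the quotient $q\colon A\to A/H$ exists and the unique arrow $\varepsilon\colon A/H\to X$ with $\varepsilon\circ q=x$ is an isomorphism.
   Context: An arrow $f\colon X\to Y$ is a strict epimorphism if for every arrow $g\colon X\to Z$ which is compatible with $f$ (meaning: for every object $C$ and all $u,v\colon C\to X$ with $f\circ u=f\circ v$ one has $g\circ u=g\circ v$) there is a unique $k\colon Y\to Z$ with $g=k\circ f$. If $H$ is a group acting on an object $A$ by automorphisms (a group homomorphism $H\to \mathrm{Aut}(A)^{op}$; write $h$ also for the corresponding automorphism), the quotient $q\colon A\to A/H$ is an arrow with $q\circ h=q$ for all $h\in H$ which is universal: every $x\colon A\to X$ with $x\circ h=x$ for all $h\in H$ factors uniquely as $x=\varphi\circ q$. Write $[A,X]$ for the hom-set. Axioms: RC0: for every object $X$ there exists an arrow $A\to X$, and every arrow $A\to X$ is a strict epimorphism. RC1: for every subgroup $H\subseteq\mathrm{Aut}(A)$ the quotient $q\colon A\to A/H$ exists and is preserved by $[A,-]$, i.e. the map $[A,A]\to[A,A/H]$, $f\mapsto q\circ f$, is surjective and $q\circ f=q\circ g$ holds iff $f=h\circ g$ for some $h\in H$. RC2: every endomorphism of $A$ is an automorphism, $[A,A]=\mathrm{Aut}(A)$. *)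

theory Defs
  imports Main
begin

record ('o, 'a) cat =
  Obj  :: "'o set"
  Arr  :: "'a set"
  dom  :: "'a \<Rightarrow> 'o"
  cod  :: "'a \<Rightarrow> 'o"
  comp :: "'a \<Rightarrow> 'a \<Rightarrow> 'a"
  idt  :: "'o \<Rightarrow> 'a"

definition category :: "('o, 'a) cat \<Rightarrow> bool" where
  "category C \<longleftrightarrow>
     (\<forall>f\<in>Arr C. dom C f \<in> Obj C \<and> cod C f \<in> Obj C) \<and>
     (\<forall>f\<in>Arr C. \<forall>g\<in>Arr C. cod C f = dom C g \<longrightarrow>
        comp C g f \<in> Arr C \<and> dom C (comp C g f) = dom C f \<and> cod C (comp C g f) = cod C g) \<and>
     (\<forall>X\<in>Obj C. idt C X \<in> Arr C \<and> dom C (idt C X) = X \<and> cod C (idt C X) = X) \<and>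
     (\<forall>f\<in>Arr C. comp C f (idt C (dom C f)) = f \<and> comp C (idt C (cod C f)) f = f) \<and>
     (\<forall>f\<in>Arr C. \<forall>g\<in>Arr C. \<forall>h\<in>Arr C. cod C f = dom C g \<longrightarrow> cod C g = dom C h \<longrightarrow>
        comp C h (comp C g f) = comp C (comp C h g) f)"

definition hom :: "('o, 'a) cat \<Rightarrow> 'o \<Rightarrow> 'o \<Rightarrow> 'a set" where
  "hom C X Y = {f \<in> Arr C. dom C f = X \<and> cod C f = Y}"

definition iso :: "('o, 'a) cat \<Rightarrow> 'a \<Rightarrow> bool" where
  "iso C f \<longleftrightarrow> f \<in> Arr C \<and>
     (\<exists>g \<in> hom C (cod C f) (dom C f).
        comp C g f = idt C (dom C f) \<and> comp C f g = idt C (cod C f))"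

definition Aut :: "('o, 'a) cat \<Rightarrow> 'o \<Rightarrow> 'a set" where
  "Aut C A = {f \<in> hom C A A. iso C f}"

definition aut_subgroup :: "('o, 'a) cat \<Rightarrow> 'o \<Rightarrow> 'a set \<Rightarrow> bool" where
  "aut_subgroup C A H \<longleftrightarrow> H \<subseteq> Aut C A \<and> idt C A \<in> H \<and>
     (\<forall>g\<in>H. \<forall>h\<in>H. comp C g h \<in> H) \<and>
     (\<forall>h\<in>H. \<exists>k\<in>H. comp C k h = idt C A \<and> comp C h k = idt C A)"

definition compatible :: "('o, 'a) cat \<Rightarrow> 'a \<Rightarrow> 'a \<Rightarrow> bool" where
  "compatible C f g \<longleftrightarrow>
     (\<forall>Z\<in>Obj C. \<forall>u\<in>hom C Z (dom C f). \<forall>v\<in>hom C Z (dom C f).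
        comp C f u = comp C f v \<longrightarrow> comp C g u = comp C g v)"

definition strict_epi :: "('o, 'a) cat \<Rightarrow> 'a \<Rightarrow> bool" where
  "strict_epi C f \<longleftrightarrow> f \<in> Arr C \<and>
     (\<forall>Z\<in>Obj C. \<forall>g\<in>hom C (dom C f) Z. compatible C f g \<longrightarrow>
        (\<exists>!k. k \<in> hom C (cod C f) Z \<and> g = comp C k f))"

definition is_quotient :: "('o, 'a) cat \<Rightarrow> 'o \<Rightarrow> 'a set \<Rightarrow> 'o \<Rightarrow> 'a \<Rightarrow> bool" where
  "is_quotient C A H Q q \<longleftrightarrow> q \<in> hom C A Q \<and> (\<forall>h\<in>H. comp C q h = q) \<and>
     (\<forall>X\<in>Obj C. \<forall>x\<in>hom C A X. (\<forall>h\<in>H. comp C x h = x) \<longrightarrow>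
        (\<exists>!\<phi>. \<phi> \<in> hom C Q X \<and> x = comp C \<phi> q))"

text \<open>The quotient is preserved by the hom functor [A,-].\<close>
definition preserved_by_hom :: "('o, 'a) cat \<Rightarrow> 'o \<Rightarrow> 'a set \<Rightarrow> 'o \<Rightarrow> 'a \<Rightarrow> bool" where
  "preserved_by_hom C A H Q q \<longleftrightarrow>
     (\<forall>y\<in>hom C A Q. \<exists>f\<in>hom C A A. y = comp C q f) \<and>
     (\<forall>f\<in>hom C A A. \<forall>g\<in>hom C A A.
        comp C q f = comp C q g \<longleftrightarrow> (\<exists>h\<in>H. f = comp C h g))"

definition RC0 :: "('o, 'a) cat \<Rightarrow> 'o \<Rightarrow> bool" where
  "RC0 C A \<longleftrightarrow> (\<forall>X\<in>Obj C. hom C A X \<noteq> {} \<and> (\<forall>f\<in>hom C A X. strict_epi C f))"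

definition RC1 :: "('o, 'a) cat \<Rightarrow> 'o \<Rightarrow> bool" where
  "RC1 C A \<longleftrightarrow> (\<forall>H. aut_subgroup C A H \<longrightarrow>
     (\<exists>Q q. is_quotient C A H Q q \<and> preserved_by_hom C A H Q q))"

definition RC2 :: "('o, 'a) cat \<Rightarrow> 'o \<Rightarrow> bool" where
  "RC2 C A \<longleftrightarrow> hom C A A = Aut C A"

definition Fix :: "('o, 'a) cat \<Rightarrow> 'o \<Rightarrow> 'a \<Rightarrow> 'a set" where
  "Fix C A x = {h \<in> Aut C A. comp C x h = x}"

end

theory Submission
  imports Defs
begin

lemma cat_parts:
  assumes "category C"
  shows cat_dc: "\<And>f. f\<in>Arr C \<Longrightarrow> dom C f \<in> Obj C \<and> cod C f \<in> Obj C"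
  and cat_comp: "\<And>f g. f\<in>Arr C \<Longrightarrow> g\<in>Arr C \<Longrightarrow> cod C f = dom C g \<Longrightarrow>
        comp C g f \<in> Arr C \<and> dom C (comp C g f) = dom C f \<and> cod C (comp C g f) = cod C g"
  and cat_id: "\<And>X. X\<in>Obj C \<Longrightarrow> idt C X \<in> Arr C \<and> dom C (idt C X) = X \<and> cod C (idt C X) = X"
  and cat_unit: "\<And>f. f\<in>Arr C \<Longrightarrow> comp C f (idt C (dom C f)) = f \<and> comp C (idt C (cod C f)) f = f"
  and cat_assoc: "\<And>f g h. f\<in>Arr C \<Longrightarrow> g\<in>Arr C \<Longrightarrow> h\<in>Arr C \<Longrightarrow> cod C f = dom C g \<Longrightarrow> cod C g = dom C h \<Longrightarrow>
        comp C h (comp C g f) = comp C (comp C h g) f"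
  using assms unfolding category_def by blast+

lemma hom_comp:
  assumes "category C" "f \<in> hom C X Y" "g \<in> hom C Y Z"
  shows "comp C g f \<in> hom C X Z"
  using assms cat_comp[OF assms(1)] unfolding hom_def by simp

lemma hom_assoc:
  assumes "category C" "f \<in> hom C X Y" "g \<in> hom C Y Z" "h \<in> hom C Z W"
  shows "comp C h (comp C g f) = comp C (comp C h g) f"
  using assms cat_assoc[OF assms(1)] unfolding hom_def by simp

lemma hom_id:
  assumes "category C" "X \<in> Obj C"
  shows "idt C X \<in> hom C X X"
  using assms cat_id[OF assms(1)] unfolding hom_def by simp

lemma hom_idl:
  assumes "category C" "f \<in> hom C X Y"
  shows "comp C (idt C Y) f = f"
  using assms cat_unit[OF assms(1)] unfolding hom_def by auto

lemma hom_idr: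
  assumes "category C" "f \<in> hom C X Y"
  shows "comp C f (idt C X) = f"
  using assms cat_unit[OF assms(1)] unfolding hom_def by auto

lemma hom_obj:
  assumes "category C" "f \<in> hom C X Y"
  shows "X \<in> Obj C" "Y \<in> Obj C"
  using assms cat_dc[OF assms(1)] unfolding hom_def by auto

lemma strict_epi_epi:
  assumes "category C" "strict_epi C f" "f \<in> hom C X Y" "k1 \<in> hom C Y Z" "k2 \<in> hom C Y Z"
    "comp C k1 f = comp C k2 f"
  shows "k1 = k2"
proof -
  have Z: "Z \<in> Obj C" using hom_obj[OF assms(1) assms(4)] by simp
  have g: "comp C k1 f \<in> hom C (dom C f) Z" using hom_comp[OF assms(1) assms(3) assms(4)] assms(3)
    by (simp add: hom_def)
  have cp: "compatible C f (comp C k1 f)"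
    unfolding compatible_def
  proof (intro ballI impI)
    fix W u v assume u: "u \<in> hom C W (dom C f)" and v: "v \<in> hom C W (dom C f)" and uv: "comp C f u = comp C f v"
    have dX: "dom C f = X" using assms(3) by (simp add: hom_def)
    have u': "u \<in> hom C W X" and v': "v \<in> hom C W X" using u v dX by simp_all
    have "comp C (comp C k1 f) u = comp C k1 (comp C f u)" using hom_assoc[OF assms(1) u' assms(3) assms(4)] by simp
    also have "\<dots> = comp C k1 (comp C f v)" using uv by simp
    also have "\<dots> = comp C (comp C k1 f) v" using hom_assoc[OF assms(1) v' assms(3) assms(4)] by simp
    finally show "comp C (comp C k1 f) u = comp C (comp C k1 f) v" .
  qed
  have all: "\<forall>Z\<in>Obj C. \<forall>g\<in>hom C (dom C f) Z. compatible C f g \<longrightarrow>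
        (\<exists>!k. k \<in> hom C (cod C f) Z \<and> g = comp C k f)" using assms(2) unfolding strict_epi_def by (rule conjunct2)
  have "\<exists>!k. k \<in> hom C (cod C f) Z \<and> comp C k1 f = comp C k f"
    by (rule all[rule_format, OF Z g cp])
  moreover have "k1 \<in> hom C (cod C f) Z" "k2 \<in> hom C (cod C f) Z"
    using assms(3,4,5) by (simp_all add: hom_def)
  ultimately show ?thesis using assms(6) by (elim ex1E) (metis (no_types))
qed

lemma aut_inv:
  assumes "h \<in> Aut C A"
  shows "\<exists>g\<in>hom C A A. comp C g h = idt C A \<and> comp C h g = idt C A"
proof -
  have i: "iso C h" and d: "dom C h = A" "cod C h = A" using assms by (simp_all add: Aut_def hom_def)
  from i obtain g where "g \<in> hom C (cod C h) (dom C h)"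
     "comp C g h = idt C (dom C h)" "comp C h g = idt C (cod C h)" unfolding iso_def by blast
  then show ?thesis using d by auto
qed

theorem proposition2p8:
  fixes C :: "('o, 'a) cat" and A :: 'o
  assumes "category C" and "A \<in> Obj C"
    and "RC0 C A" and "RC1 C A" and "RC2 C A"
  shows "\<forall>X\<in>Obj C. \<forall>x\<in>hom C A X.
           (\<exists>Q q. is_quotient C A (Fix C A x) Q q) \<and>
           (\<forall>Q q. is_quotient C A (Fix C A x) Q q \<longrightarrow>
              (\<forall>\<epsilon>\<in>hom C Q X. comp C \<epsilon> q = x \<longrightarrow> iso C \<epsilon>))"
proof (intro ballI conjI allI impI)
  note cat = assms(1)
  have AA: "hom C A A = Aut C A" using assms(5) by (simp add: RC2_def)
  have se: "\<And>Y f. Y \<in> Obj C \<Longrightarrow> f \<in> hom C A Y \<Longrightarrow> strict_epi C f"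
    using assms(3) by (simp add: RC0_def)
  have ex: "\<And>Y. Y \<in> Obj C \<Longrightarrow> \<exists>f. f \<in> hom C A Y"
    using assms(3) by (auto simp: RC0_def)
  have idA: "idt C A \<in> hom C A A" using hom_id[OF cat assms(2)] .
  fix X x assume X: "X \<in> Obj C" and x: "x \<in> hom C A X"
  let ?H = "Fix C A x"
  have inv: "\<exists>g\<in>hom C A A. comp C g h = idt C A \<and> comp C h g = idt C A" if "h \<in> hom C A A" for h
    using aut_inv[of h C A] that AA by auto
  show "\<exists>Q q. is_quotient C A ?H Q q"
  proof -
    have "aut_subgroup C A ?H"
      unfolding aut_subgroup_def
    proof (intro conjI ballI)
      show "?H \<subseteq> Aut C A" by (auto simp: Fix_def)
      show "idt C A \<in> ?H" using idA AA hom_idr[OF cat x] by (auto simp: Fix_def)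
    next
      fix g h assume g: "g \<in> ?H" and h: "h \<in> ?H"
      then have gh: "g \<in> hom C A A" "h \<in> hom C A A" "comp C x g = x" "comp C x h = x"
        using AA by (auto simp: Fix_def)
      have "comp C x (comp C g h) = x" using hom_assoc[OF cat gh(2) gh(1) x] gh by simp
      then show "comp C g h \<in> ?H" using hom_comp[OF cat gh(2) gh(1)] AA by (auto simp: Fix_def)
    next
      fix h assume h: "h \<in> ?H"
      then have hh: "h \<in> hom C A A" "comp C x h = x" using AA by (auto simp: Fix_def)
      obtain g where g: "g \<in> hom C A A" "comp C g h = idt C A" "comp C h g = idt C A"
        using inv[OF hh(1)] by blast
      have "comp C x g = comp C (comp C x h) g" using hh by simp
      also have "\<dots> = comp C x (comp C h g)" using hom_assoc[OF cat g(1) hh(1) x] by simp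
      also have "\<dots> = x" using g hom_idr[OF cat x] by simp
      finally have "g \<in> ?H" using g AA by (auto simp: Fix_def)
      then show "\<exists>k\<in>?H. comp C k h = idt C A \<and> comp C h k = idt C A" using g by blast
    qed
    then show ?thesis using assms(4) unfolding RC1_def by blast
  qed
next
  note cat = assms(1)
  have AA: "hom C A A = Aut C A" using assms(5) by (simp add: RC2_def)
  have se: "\<And>Y f. Y \<in> Obj C \<Longrightarrow> f \<in> hom C A Y \<Longrightarrow> strict_epi C f"
    using assms(3) by (simp add: RC0_def)
  have ex: "\<And>Y. Y \<in> Obj C \<Longrightarrow> \<exists>f. f \<in> hom C A Y"
    using assms(3) by (auto simp: RC0_def)
  have idA: "idt C A \<in> hom C A A" using hom_id[OF cat assms(2)] .
  fix X x Q q \<epsilon>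
  assume X: "X \<in> Obj C" and x: "x \<in> hom C A X" and quot: "is_quotient C A (Fix C A x) Q q"
    and e: "\<epsilon> \<in> hom C Q X" and eq: "comp C \<epsilon> q = x"
  let ?H = "Fix C A x"
  have inv: "\<exists>g\<in>hom C A A. comp C g h = idt C A \<and> comp C h g = idt C A" if "h \<in> hom C A A" for h
    using aut_inv[of h C A] that AA by auto
  have q: "q \<in> hom C A Q" and qH: "\<And>h. h \<in> ?H \<Longrightarrow> comp C q h = q"
    using quot by (auto simp: is_quotient_def)
  have Q: "Q \<in> Obj C" using hom_obj[OF cat q] by simp
  have sx: "strict_epi C x" using se[OF X x] .
  have sq: "strict_epi C q" using se[OF Q q] .
  have cp: "compatible C x q"
    unfolding compatible_def
  proof (intro ballI impI)
    fix Z u v assume Z: "Z \<in> Obj C" and u: "u \<in> hom C Z (dom C x)" and v: "v \<in> hom C Z (dom C x)"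
      and uv: "comp C x u = comp C x v"
    have u': "u \<in> hom C Z A" and v': "v \<in> hom C Z A" using u v x by (auto simp: hom_def)
    obtain a where a: "a \<in> hom C A Z" using ex[OF Z] by blast
    have ua: "comp C u a \<in> hom C A A" using hom_comp[OF cat a u'] .
    have va: "comp C v a \<in> hom C A A" using hom_comp[OF cat a v'] .
    obtain w where w: "w \<in> hom C A A" "comp C w (comp C v a) = idt C A" "comp C (comp C v a) w = idt C A"
      using inv[OF va] by blast
    define h where "h = comp C (comp C u a) w"
    have h: "h \<in> hom C A A" unfolding h_def using hom_comp[OF cat w(1) ua] .
    have xua: "comp C x (comp C u a) = comp C x (comp C v a)"
      using hom_assoc[OF cat a u' x] hom_assoc[OF cat a v' x] uv by simp
    have "comp C x h = comp C (comp C x (comp C u a)) w"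
      unfolding h_def using hom_assoc[OF cat w(1) ua x] by simp
    also have "\<dots> = comp C (comp C x (comp C v a)) w" using xua by simp
    also have "\<dots> = comp C x (comp C (comp C v a) w)" using hom_assoc[OF cat w(1) va x] by simp
    also have "\<dots> = x" using w hom_idr[OF cat x] by simp
    finally have hH: "h \<in> ?H" using h AA by (auto simp: Fix_def)
    have "comp C h (comp C v a) = comp C (comp C u a) (comp C w (comp C v a))"
      unfolding h_def using hom_assoc[OF cat va w(1) ua] by simp
    also have "\<dots> = comp C u a" using w hom_idr[OF cat ua] by simp
    finally have hva: "comp C h (comp C v a) = comp C u a" .
    have "comp C (comp C q u) a = comp C q (comp C u a)" using hom_assoc[OF cat a u' q] by simp
    also have "\<dots> = comp C q (comp C h (comp C v a))" using hva by simp
    also have "\<dots> = comp C (comp C q h) (comp C v a)" using hom_assoc[OF cat va h q] by simp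
    also have "\<dots> = comp C q (comp C v a)" using qH[OF hH] by simp
    also have "\<dots> = comp C (comp C q v) a" using hom_assoc[OF cat a v' q] by simp
    finally have "comp C (comp C q u) a = comp C (comp C q v) a" .
    then show "comp C q u = comp C q v"
      using strict_epi_epi[OF cat se[OF Z a] a hom_comp[OF cat u' q] hom_comp[OF cat v' q]] by simp
  qed
  have qd: "q \<in> hom C (dom C x) Q" using q x by (simp add: hom_def)
  obtain k where k: "k \<in> hom C (cod C x) Q" "q = comp C k x"
    using sx Q qd cp unfolding strict_epi_def by blast
  have k': "k \<in> hom C X Q" using k x by (simp add: hom_def)
  have "comp C (comp C \<epsilon> k) x = comp C \<epsilon> q" using hom_assoc[OF cat x k' e] k by simp
  also have "\<dots> = comp C (idt C X) x" using eq hom_idl[OF cat x] by simp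
  finally have ek: "comp C \<epsilon> k = idt C X"
    using strict_epi_epi[OF cat sx x hom_comp[OF cat k' e] hom_id[OF cat X]] by simp
  have "comp C (comp C k \<epsilon>) q = comp C k x" using hom_assoc[OF cat q e k'] eq by simp
  also have "\<dots> = comp C (idt C Q) q" using k hom_idl[OF cat q] by simp
  finally have ke: "comp C k \<epsilon> = idt C Q"
    using strict_epi_epi[OF cat sq q hom_comp[OF cat e k'] hom_id[OF cat Q]] by simp
  show "iso C \<epsilon>" unfolding iso_def using e k' ek ke by (auto simp: hom_def)
qed

end
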